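(* Let $A\subseteq\mathcal{R}$ be outer measurable and let $I$ be an interval in $\mathcal{R}$ with $I\cap A=\emptyset$. Then $A\cup I$ is outer measurable and $M_u(A\cup I)=M_u(A)+l(I)$.
   Context: $\mathcal{R}$ denotes the Levi-Civita field: functions $x:\mathbb{Q}\to\mathbb{R}$ with left-finite support, with componentwise addition and formal power series multiplication, ordered by $x>0$ iff $x\ne0$ and $x[\min\operatorname{supp}x]>0$; it is a non-Archimedean ordered field extension of $\mathbb{R}$, Cauchy complete in the order topology, in which all limits and series are taken (a series $\sum a_n$ converges iff $a_n\to0$). An interval is a set $[a,b],[a,b),(a,b]$ or $(a,b)$ with $a<b$ in $\mathcal{R}$, of length $l=b-a$. A cover of $A\subseteq\mathcal{R}$ is a sequence of intervals $(S_n)_{n\ge1}$ with $A\subseteq\bigcup_n S_n$ and $\sum_n l(S_n)$ convergent in $\mathcal{R}$. $A$ is called outer measurable if the infimum $\inf\{\sum_n l(S_n): (S_n)\text{ a cover of }A\}$ exists in $\mathcal{R}$; this infimum is then called the outer measure $M_u(A)$. *)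

theory Defs
  imports Complex_Main
begin

typedef lc = "{x :: rat \<Rightarrow> real. \<forall>q. finite {r. r < q \<and> x r \<noteq> 0}}"
  morphisms coeff Abs_lc
  by (rule exI[of _ "\<lambda>_. 0"]) simp

setup_lifting type_definition_lc

lemma lc_add_closed:
  assumes "\<forall>q. finite {r. r < q \<and> x r \<noteq> (0::real)}"
      and "\<forall>q. finite {r. r < q \<and> y r \<noteq> (0::real)}"
  shows "\<forall>q. finite {r. r < q \<and> x r + y r \<noteq> 0}"
proof
  fix q
  have "{r. r < q \<and> x r + y r \<noteq> 0} \<subseteq> {r. r < q \<and> x r \<noteq> 0} \<union> {r. r < q \<and> y r \<noteq> 0}"
    by auto
  then show "finite {r. r < q \<and> x r + y r \<noteq> 0}"
    using assms by (meson finite_Un finite_subset)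
qed

instantiation lc :: "{zero, plus, uminus, minus, ord}"
begin

lift_definition zero_lc :: lc is "\<lambda>_. 0" by simp

lift_definition plus_lc :: "lc \<Rightarrow> lc \<Rightarrow> lc" is "\<lambda>x y q. x q + y q"
  using lc_add_closed by blast

lift_definition uminus_lc :: "lc \<Rightarrow> lc" is "\<lambda>x q. - x q" by simp

definition minus_lc :: "lc \<Rightarrow> lc \<Rightarrow> lc" where
  "minus_lc x y = x + (- y)"

definition lc_pos :: "lc \<Rightarrow> bool" where
  "lc_pos x \<longleftrightarrow> (\<exists>q. coeff x q > 0 \<and> (\<forall>r<q. coeff x r = 0))"

definition less_lc :: "lc \<Rightarrow> lc \<Rightarrow> bool" where
  "less_lc x y \<longleftrightarrow> lc_pos (y - x)"

definition less_eq_lc :: "lc \<Rightarrow> lc \<Rightarrow> bool" where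
  "less_eq_lc x y \<longleftrightarrow> x < y \<or> x = y"

instance ..
end

definition lc_tendsto :: "(nat \<Rightarrow> lc) \<Rightarrow> lc \<Rightarrow> bool" where
  "lc_tendsto f L \<longleftrightarrow>
     (\<forall>a b. a < L \<and> L < b \<longrightarrow> (\<exists>N. \<forall>n\<ge>N. a < f n \<and> f n < b))"

primrec lc_psum :: "(nat \<Rightarrow> lc) \<Rightarrow> nat \<Rightarrow> lc" where
  "lc_psum f 0 = 0"
| "lc_psum f (Suc n) = lc_psum f n + f n"

definition lc_sums :: "(nat \<Rightarrow> lc) \<Rightarrow> lc \<Rightarrow> bool" where
  "lc_sums f s \<longleftrightarrow> lc_tendsto (lc_psum f) s"

text \<open>An interval is given by endpoints a < b and two flags saying whether the
  left/right endpoint is included.\<close>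
type_synonym lc_ivl = "lc \<times> lc \<times> bool \<times> bool"

definition ivl_set :: "lc \<Rightarrow> lc \<Rightarrow> bool \<Rightarrow> bool \<Rightarrow> lc set" where
  "ivl_set a b cl cr = {x. (if cl then a \<le> x else a < x) \<and> (if cr then x \<le> b else x < b)}"

definition ivl_ok :: "lc_ivl \<Rightarrow> bool" where
  "ivl_ok S \<longleftrightarrow> fst S < fst (snd S)"

definition ivl_of :: "lc_ivl \<Rightarrow> lc set" where
  "ivl_of S = ivl_set (fst S) (fst (snd S)) (fst (snd (snd S))) (snd (snd (snd S)))"

definition ivl_len :: "lc_ivl \<Rightarrow> lc" where
  "ivl_len S = fst (snd S) - fst S"

definition is_cover :: "(nat \<Rightarrow> lc_ivl) \<Rightarrow> lc set \<Rightarrow> bool" where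
  "is_cover S A \<longleftrightarrow> (\<forall>n. ivl_ok (S n)) \<and> A \<subseteq> (\<Union>n. ivl_of (S n))
      \<and> (\<exists>s. lc_sums (\<lambda>n. ivl_len (S n)) s)"

definition cover_sums :: "lc set \<Rightarrow> lc set" where
  "cover_sums A = {s. \<exists>S. is_cover S A \<and> lc_sums (\<lambda>n. ivl_len (S n)) s}"

definition is_inf_lc :: "lc set \<Rightarrow> lc \<Rightarrow> bool" where
  "is_inf_lc X m \<longleftrightarrow> (\<forall>x\<in>X. m \<le> x) \<and> (\<forall>m'. (\<forall>x\<in>X. m' \<le> x) \<longrightarrow> m' \<le> m)"

definition outer_measurable :: "lc set \<Rightarrow> bool" where
  "outer_measurable A \<longleftrightarrow> (\<exists>m. is_inf_lc (cover_sums A) m)"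

definition Mu :: "lc set \<Rightarrow> lc" where
  "Mu A = (THE m. is_inf_lc (cover_sums A) m)"

end

theory Submission
  imports Defs "HOL-Analysis.Continuum_Not_Denumerable"
begin


lemma coeff_plus[simp]: "coeff (x + y) q = coeff x q + coeff y q"
  by transfer simp
lemma coeff_uminus[simp]: "coeff (- x) q = - coeff x q"
  by transfer simp
lemma coeff_zero[simp]: "coeff 0 q = 0"
  by transfer simp
lemma coeff_minus[simp]: "coeff (x - y) q = coeff x q - coeff y q"
  by (simp add: minus_lc_def)
lemma lc_eqI: "(\<And>q. coeff x q = coeff y q) \<Longrightarrow> x = y"
  by (metis coeff_inject ext)

instance lc :: ab_group_add
  by standard (auto intro!: lc_eqI simp: minus_lc_def)

lemma exists_lead:
  assumes "x \<noteq> 0"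
  shows "\<exists>e. coeff x e \<noteq> 0 \<and> (\<forall>r<e. coeff x r = 0)"
proof -
  obtain r0 where r0: "coeff x r0 \<noteq> 0" using assms lc_eqI by force
  define S where "S = {r. r < r0 \<and> coeff x r \<noteq> 0}"
  have fin: "finite S" unfolding S_def using coeff[of x] by auto
  show ?thesis
  proof (cases "S = {}")
    case True then show ?thesis using r0 unfolding S_def by (intro exI[of _ r0]) auto
  next
    case False
    define e where "e = Min S"
    have "e \<in> S" unfolding e_def using fin False by simp
    moreover have "\<forall>r<e. coeff x r = 0"
    proof (intro allI impI, rule ccontr)
      fix r assume "r < e" "coeff x r \<noteq> 0"
      then have "r \<in> S" using \<open>e \<in> S\<close> unfolding S_def by auto
      then have "e \<le> r" unfolding e_def using fin by simp
      then show False using \<open>r < e\<close> by simp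
    qed
    ultimately show ?thesis unfolding S_def by auto
  qed
qed

lemma pos_add: "lc_pos x \<Longrightarrow> lc_pos y \<Longrightarrow> lc_pos (x + y)"
  unfolding lc_pos_def
proof (elim exE conjE)
  fix e1 e2 assume a: "0 < coeff x e1" "\<forall>r<e1. coeff x r = 0" "0 < coeff y e2" "\<forall>r<e2. coeff y r = 0"
  show "\<exists>q. 0 < coeff (x + y) q \<and> (\<forall>r<q. coeff (x + y) r = 0)"
  proof (cases e1 e2 rule: linorder_cases)
    case less then show ?thesis using a by (intro exI[of _ e1]) auto
  next
    case equal then show ?thesis using a by (intro exI[of _ e1]) auto
  next
    case greater then show ?thesis using a by (intro exI[of _ e2]) auto
  qed
qed

lemma pos_neg: "lc_pos x \<Longrightarrow> lc_pos (- x) \<Longrightarrow> False"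
  unfolding lc_pos_def
proof (elim exE conjE)
  fix e1 e2 assume a: "0 < coeff x e1" "\<forall>r<e1. coeff x r = 0" "0 < coeff (-x) e2" "\<forall>r<e2. coeff (-x) r = 0"
  show False
  proof (cases e1 e2 rule: linorder_cases)
    case less then show ?thesis using a(1) a(4) by auto
  next
    case equal then show ?thesis using a(1) a(3) by auto
  next
    case greater then show ?thesis using a(2) a(3) by auto
  qed
qed

lemma pos_zero: "\<not> lc_pos 0"
  unfolding lc_pos_def by simp

lemma pos_total: "x \<noteq> 0 \<Longrightarrow> lc_pos x \<or> lc_pos (- x)"
proof -
  assume "x \<noteq> 0"
  then obtain e where e: "coeff x e \<noteq> 0" "\<forall>r<e. coeff x r = 0" using exists_lead by blast
  show ?thesis
  proof (cases "0 < coeff x e")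
    case True then show ?thesis using e unfolding lc_pos_def by blast
  next
    case False
    then have "0 < coeff (-x) e" using e(1) by simp
    then show ?thesis using e(2) unfolding lc_pos_def by auto
  qed
qed

lemma pos_antisym: "lc_pos (y - x) \<Longrightarrow> lc_pos ((x::lc) - y) \<Longrightarrow> False"
  using pos_neg[of "y - x"] by (simp add: minus_diff_eq)

lemma pos_total2: "x \<noteq> (y::lc) \<Longrightarrow> lc_pos (y - x) \<or> lc_pos (x - y)"
  using pos_total[of "y - x"] by (simp add: minus_diff_eq)

instance lc :: linordered_ab_group_add
proof
  fix x y z :: lc
  show "(x < y) = (x \<le> y \<and> \<not> y \<le> x)"
    unfolding less_eq_lc_def less_lc_def
    using pos_antisym[of x y] pos_zero by auto
  show "x \<le> x" unfolding less_eq_lc_def by simp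
  show "x \<le> y \<Longrightarrow> y \<le> z \<Longrightarrow> x \<le> z"
  proof -
    assume "x \<le> y" "y \<le> z"
    moreover have "z - x = (z - y) + (y - x)" by simp
    ultimately show "x \<le> z" unfolding less_eq_lc_def less_lc_def
      using pos_add[of "z - y" "y - x"] by auto
  qed
  show "x \<le> y \<Longrightarrow> y \<le> x \<Longrightarrow> x = y"
    unfolding less_eq_lc_def less_lc_def
    using pos_antisym[of x y] by auto
  show "x \<le> y \<Longrightarrow> z + x \<le> z + y"
    unfolding less_eq_lc_def less_lc_def by simp
  show "x \<le> y \<or> y \<le> x"
    unfolding less_eq_lc_def less_lc_def
    using pos_total2[of x y] by auto
qed

lemma pos_iff: "0 < x \<longleftrightarrow> lc_pos x"
  unfolding less_lc_def by simp


lemma scale_closed: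
  assumes a: "\<forall>q. finite {r. r < q \<and> x r \<noteq> (0::real)}"
  shows "\<forall>q. finite {r. r < q \<and> (s::real) * x r \<noteq> 0}"
proof
  fix q :: 'a
  have "{r. r < q \<and> s * x r \<noteq> 0} \<subseteq> {r. r < q \<and> x r \<noteq> 0}" by auto
  then show "finite {r. r < q \<and> s * x r \<noteq> 0}" using a finite_subset by blast
qed

instantiation lc :: real_vector
begin
lift_definition scaleR_lc :: "real \<Rightarrow> lc \<Rightarrow> lc" is "\<lambda>s x q. s * x q"
  using scale_closed by blast
instance by standard (auto intro!: lc_eqI simp: scaleR_lc.rep_eq algebra_simps)
end

lemma coeff_scaleR[simp]: "coeff (s *\<^sub>R x) q = s * coeff x q"
  by (simp add: scaleR_lc.rep_eq)

lemma pos_scaleR: "0 < s \<Longrightarrow> 0 < x \<Longrightarrow> 0 < s *\<^sub>R (x::lc)"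
  unfolding pos_iff lc_pos_def
proof (elim exE conjE)
  fix q assume "0 < s" "0 < coeff x q" "\<forall>r<q. coeff x r = 0"
  then show "\<exists>q. 0 < coeff (s *\<^sub>R x) q \<and> (\<forall>r<q. coeff (s *\<^sub>R x) r = 0)"
    by (intro exI[of _ q]) auto
qed

instance lc :: ordered_real_vector
proof
  fix x y :: lc and a b :: real
  show "x \<le> y \<Longrightarrow> 0 \<le> a \<Longrightarrow> a *\<^sub>R x \<le> a *\<^sub>R y"
    by (metis diff_ge_0_iff_ge le_less pos_scaleR scaleR_right_diff_distrib scaleR_zero_left)
  show "a \<le> b \<Longrightarrow> 0 \<le> x \<Longrightarrow> a *\<^sub>R x \<le> b *\<^sub>R x"
    by (metis diff_ge_0_iff_ge le_less pos_scaleR scaleR_left_diff_distrib scaleR_zero_right)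
qed

lemma shift_closed:
  fixes x :: "rat \<Rightarrow> real"
  assumes a: "\<forall>q. finite {r. r < q \<and> x r \<noteq> 0}"
  shows "\<forall>q. finite {r. r < q \<and> x (r - 1) \<noteq> 0}"
proof
  fix q :: rat
  have "{r. r < q \<and> x (r - 1) \<noteq> 0} \<subseteq> (\<lambda>r. r + 1) ` {r. r < q - 1 \<and> x r \<noteq> 0}"
    by (auto intro!: image_eqI[where x="_ - 1"])
  then show "finite {r. r < q \<and> x (r - 1) \<noteq> 0}"
    using a finite_subset by blast
qed

lift_definition shift :: "lc \<Rightarrow> lc" is "\<lambda>x q. x (q - 1)"
  using shift_closed by blast

lemma negl_exists:
  assumes "0 < (d::lc)"
  shows "\<exists>\<eta>>0. \<forall>s>0. \<eta> < s *\<^sub>R d"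
proof -
  obtain e where e: "0 < coeff d e" "\<forall>r<e. coeff d r = 0"
    using assms unfolding pos_iff lc_pos_def by auto
  have "0 < shift d" unfolding pos_iff lc_pos_def
    using e by (intro exI[of _ "e+1"]) (auto simp: shift.rep_eq)
  moreover have "shift d < s *\<^sub>R d" if "s > 0" for s
    unfolding less_lc_def lc_pos_def
    using e that by (intro exI[of _ e]) (auto simp: shift.rep_eq)
  ultimately show ?thesis by blast
qed


lemma psum_sum: "lc_psum f n = sum f {..<n}"
  by (induction n) auto

lemma sum_split_nat: "sum f {..<n + j} = sum f {..<n} + sum (\<lambda>i. f (n + i)) {..<(j::nat)}"
  for f :: "nat \<Rightarrow> 'a::comm_monoid_add"
  by (induction j) (auto simp: add.assoc)

lemma tendsto_add_const: "lc_tendsto f L \<Longrightarrow> lc_tendsto (\<lambda>n. c + f n) (c + L)"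
  unfolding lc_tendsto_def
proof (intro allI impI)
  fix a b assume h: "\<forall>a b. a < L \<and> L < b \<longrightarrow> (\<exists>N. \<forall>n\<ge>N. a < f n \<and> f n < b)"
    and ab: "a < c + L \<and> c + L < b"
  then have "a - c < L \<and> L < b - c" by (auto simp: algebra_simps)
  then obtain N where "\<forall>n\<ge>N. a - c < f n \<and> f n < b - c" using h by blast
  then show "\<exists>N. \<forall>n\<ge>N. a < c + f n \<and> c + f n < b" by (auto simp: algebra_simps)
qed

lemma tendsto_shift_back: "lc_tendsto (\<lambda>j. F (K + j)) L \<Longrightarrow> lc_tendsto F L"
  unfolding lc_tendsto_def
proof (intro allI impI)
  fix a b assume h: "\<forall>a b. a < L \<and> L < b \<longrightarrow> (\<exists>N. \<forall>n\<ge>N. a < F (K + n) \<and> F (K + n) < b)"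
    and ab: "a < L \<and> L < b"
  then obtain N where N: "\<forall>n\<ge>N. a < F (K + n) \<and> F (K + n) < b" by blast
  show "\<exists>N. \<forall>n\<ge>N. a < F n \<and> F n < b"
  proof (intro exI allI impI)
    fix n assume "K + N \<le> n"
    then show "a < F n \<and> F n < b" using N[rule_format, of "n - K"] by auto
  qed
qed

lemma tendsto_shift_fwd: "lc_tendsto F L \<Longrightarrow> lc_tendsto (\<lambda>j. F (K + j)) L"
  unfolding lc_tendsto_def
  by (metis (no_types, lifting) le_add2 order_trans)

lemma half_pos: "0 < (e::lc) \<Longrightarrow> 0 < (1/2::real) *\<^sub>R e"
  by (simp add: pos_scaleR)

lemma half_half: "(1/2::real) *\<^sub>R e + (1/2::real) *\<^sub>R e = (e::lc)"
  by (metis field_sum_of_halves scaleR_add_left scaleR_one)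

lemma terms_small:
  assumes "lc_sums f L" "0 < e"
  shows "\<exists>N. \<forall>n\<ge>N. f n < e"
proof -
  define h where "h = (1/2::real) *\<^sub>R e"
  have h: "0 < h" "h + h = e" using assms half_pos half_half unfolding h_def by auto
  have "L - h < L \<and> L < L + h" using h by auto
  then obtain N where N: "\<forall>n\<ge>N. L - h < lc_psum f n \<and> lc_psum f n < L + h"
    using assms unfolding lc_sums_def lc_tendsto_def by blast
  show ?thesis
  proof (intro exI allI impI)
    fix n assume "N \<le> n"
    then have "N \<le> Suc n" by simp
    then have a: "lc_psum f (Suc n) < L + h" "L - h < lc_psum f n" using N \<open>N \<le> n\<close> by blast+
    have "f n = lc_psum f (Suc n) - lc_psum f n" by simp
    also have "\<dots> < (L + h) - (L - h)" using a by (meson diff_strict_mono)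
    also have "\<dots> = e" using h by (simp add: algebra_simps)
    finally show "f n < e" .
  qed
qed

lemma inf_unique: "is_inf_lc X m \<Longrightarrow> is_inf_lc X m' \<Longrightarrow> m = m'"
  unfolding is_inf_lc_def by (meson order_antisym)



definition clamp :: "'a::linorder \<Rightarrow> 'a \<Rightarrow> 'a \<Rightarrow> 'a" where
  "clamp a b x = max a (min x b)"

definition mu :: "'a::linordered_ab_group_add \<Rightarrow> 'a \<Rightarrow> 'a \<Rightarrow> 'a \<Rightarrow> 'a" where
  "mu a b p q = clamp a b q - clamp a b p"

lemma clamp_lo: "x \<le> a \<Longrightarrow> a \<le> b \<Longrightarrow> clamp a b x = a"
  unfolding clamp_def by (metis max.absorb1 min.absorb1 min.coboundedI1 order.trans)
lemma clamp_mid: "a \<le> x \<Longrightarrow> x \<le> b \<Longrightarrow> clamp a b x = x"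
  unfolding clamp_def by simp
lemma clamp_hi: "b \<le> x \<Longrightarrow> a \<le> b \<Longrightarrow> clamp a b x = b"
  unfolding clamp_def by simp
lemma clamp_bounds: "a \<le> b \<Longrightarrow> a \<le> clamp a b x \<and> clamp a b x \<le> b"
  unfolding clamp_def by simp
lemma clamp_mono: "x \<le> y \<Longrightarrow> clamp a b x \<le> clamp a b y"
  unfolding clamp_def by (simp add: max.coboundedI2 min.coboundedI1)

lemma mu_nonneg: "p \<le> q \<Longrightarrow> 0 \<le> mu a b p q"
  unfolding mu_def using clamp_mono by (simp add: clamp_mono)

lemma clamp_identity:
  fixes a a' b' b x :: "'a::linordered_ab_group_add"
  assumes o: "a \<le> a'" "a' \<le> b'" "b' \<le> b"
  shows "clamp a b x + a' + b' = clamp a a' x + clamp a' b' x + clamp b' b x"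
proof -
  have ab: "a \<le> b" using o by (meson order.trans)
  have ab': "a \<le> b'" using o by (meson order.trans)
  have a'b: "a' \<le> b" using o by (meson order.trans)
  consider "x \<le> a" | "a \<le> x \<and> x \<le> a'" | "a' \<le> x \<and> x \<le> b'" | "b' \<le> x \<and> x \<le> b" | "b \<le> x"
    by (meson linear)
  then show ?thesis
  proof cases
    case 1
    have "x \<le> a'" "x \<le> b'" using 1 o by (meson order.trans)+
    then have "clamp a b x = a" "clamp a a' x = a" "clamp a' b' x = a'" "clamp b' b x = b'"
      using 1 o ab by (simp_all add: clamp_lo)
    then show ?thesis by (simp only:)
  next
    case 2
    have "x \<le> b'" "x \<le> b" using 2 o by (meson order.trans)+
    then have "clamp a b x = x" "clamp a a' x = x" "clamp a' b' x = a'" "clamp b' b x = b'"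
      using 2 o ab by (simp_all add: clamp_lo clamp_mid)
    then show ?thesis by (simp only:)
  next
    case 3
    have "a \<le> x" "x \<le> b" using 3 o by (meson order.trans)+
    then have "clamp a b x = x" "clamp a a' x = a'" "clamp a' b' x = x" "clamp b' b x = b'"
      using 3 o ab by (simp_all add: clamp_lo clamp_mid clamp_hi)
    then show ?thesis by (simp only: add.commute add.left_commute)
  next
    case 4
    have "a \<le> x" "a' \<le> x" using 4 o by (meson order.trans)+
    then have "clamp a b x = x" "clamp a a' x = a'" "clamp a' b' x = b'" "clamp b' b x = x"
      using 4 o ab by (simp_all add: clamp_mid clamp_hi)
    then show ?thesis by (simp only: add.commute add.left_commute)
  next
    case 5
    have "a \<le> x" "a' \<le> x" "b' \<le> x" using 5 o by (meson order.trans)+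
    then have "clamp a b x = b" "clamp a a' x = a'" "clamp a' b' x = b'" "clamp b' b x = b"
      using 5 o ab ab' a'b by (simp_all add: clamp_hi)
    then show ?thesis by (simp only: add.commute add.left_commute)
  qed
qed

lemma mu_split:
  fixes a a' b' b p q :: "'a::linordered_ab_group_add"
  assumes o: "a \<le> a'" "a' \<le> b'" "b' \<le> b" and pq: "p \<le> q"
  shows "mu a a' p q + mu b' b p q \<le> mu a b p q"
proof -
  have "mu a b p q = (clamp a b q + a' + b') - (clamp a b p + a' + b')"
    unfolding mu_def by (simp add: algebra_simps)
  also have "\<dots> = (clamp a a' q + clamp a' b' q + clamp b' b q) - (clamp a a' p + clamp a' b' p + clamp b' b p)"
    unfolding clamp_identity[OF o, of p] clamp_identity[OF o, of q] ..
  also have "\<dots> = mu a a' p q + mu a' b' p q + mu b' b p q"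
    unfolding mu_def by (simp add: algebra_simps)
  finally have e: "mu a b p q = mu a a' p q + mu a' b' p q + mu b' b p q" .
  show ?thesis using mu_nonneg[OF pq, of a' b'] unfolding e by (simp add: algebra_simps)
qed

lemma FC:
  fixes P Q :: "nat \<Rightarrow> 'a::{linordered_ab_group_add, ordered_real_vector}"
  assumes PQ: "\<And>n. P n \<le> Q n"
  shows "a \<le> b \<Longrightarrow> 0 < w \<Longrightarrow> (\<Sum>n<N. mu a b (P n) (Q n)) + w \<le> b - a \<Longrightarrow>
    \<exists>g h. a \<le> g \<and> g < h \<and> h \<le> b \<and> w \<le> (2^N) *\<^sub>R (h - g) \<and>
       (\<forall>n<N. \<forall>x. g < x \<and> x < h \<longrightarrow> \<not> (P n \<le> x \<and> x \<le> Q n))"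
proof (induction N arbitrary: a b w)
  case 0
  then have "w \<le> b - a" by simp
  then have "0 < b - a" by (rule less_le_trans[OF 0(2)])
  then have "a < b" by simp
  then show ?case using 0 by (intro exI[of _ a] exI[of _ b]) auto
next
  case (Suc N)
  define p where "p = P N"
  define q where "q = Q N"
  define a' where "a' = clamp a b p"
  define b' where "b' = clamp a b q"
  have pq: "p \<le> q" using PQ unfolding p_def q_def by simp
  have o: "a \<le> a'" "a' \<le> b'" "b' \<le> b"
    using clamp_bounds[OF Suc.prems(1)] clamp_mono[OF pq] unfolding a'_def b'_def by auto
  define SL where "SL = (\<Sum>n<N. mu a a' (P n) (Q n))"
  define SR where "SR = (\<Sum>n<N. mu b' b (P n) (Q n))"
  define SK where "SK = (\<Sum>n<N. mu a b (P n) (Q n))"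
  have "SL + SR = (\<Sum>n<N. mu a a' (P n) (Q n) + mu b' b (P n) (Q n))"
    unfolding SL_def SR_def by (simp add: sum.distrib)
  also have "\<dots> \<le> SK" unfolding SK_def
    by (rule sum_mono) (rule mu_split[OF o PQ])
  finally have LRK: "SL + SR \<le> SK" .
  have K: "SK + (b' - a') + w \<le> b - a"
    using Suc.prems(3) unfolding SK_def mu_def a'_def b'_def p_def q_def by simp
  define w2 where "w2 = (1/2::real) *\<^sub>R w"
  have w2: "0 < w2" "w2 + w2 = w"
  proof -
    have "0 \<le> w2" unfolding w2_def using Suc.prems(2) by (simp add: scaleR_nonneg_nonneg)
    moreover have "w2 \<noteq> 0" unfolding w2_def using Suc.prems(2) by simp
    ultimately show "0 < w2" by simp
    show "w2 + w2 = w" unfolding w2_def scaleR_add_left[symmetric] by simp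
  qed
  have side: "SL + w2 \<le> a' - a \<or> SR + w2 \<le> b - b'"
  proof (rule ccontr)
    assume "\<not> ?thesis"
    then have "a' - a < SL + w2" "b - b' < SR + w2" by auto
    then have "(a' - a) + (b - b') < (SL + w2) + (SR + w2)" by (rule add_strict_mono)
    also have "\<dots> = (SL + SR) + w" using w2 by (simp add: algebra_simps)
    also have "\<dots> \<le> SK + w" using LRK by simp
    finally have "(a' - a) + (b - b') + (b' - a') < (SK + w) + (b' - a')" by (rule add_strict_right_mono)
    moreover have "(a' - a) + (b - b') + (b' - a') = b - a" by (simp add: algebra_simps)
    moreover have "(SK + w) + (b' - a') = SK + (b' - a') + w" by (simp add: algebra_simps)
    ultimately have "b - a < SK + (b' - a') + w" by simp
    then show False using K by simp
  qed
  have dbl: "w \<le> 2 ^ Suc N *\<^sub>R (h - g)" if "w2 \<le> 2 ^ N *\<^sub>R (h - g)" for g h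
  proof -
    have "w = 2 *\<^sub>R w2" using w2(2) by (simp add: scaleR_2)
    also have "\<dots> \<le> 2 *\<^sub>R (2 ^ N *\<^sub>R (h - g))" using that by (rule scaleR_left_mono) simp
    also have "\<dots> = 2 ^ Suc N *\<^sub>R (h - g)" by simp
    finally show ?thesis .
  qed
  from side show ?case
  proof
    assume h: "SL + w2 \<le> a' - a"
    obtain g h where gh: "a \<le> g" "g < h" "h \<le> a'" "w2 \<le> 2 ^ N *\<^sub>R (h - g)"
      "\<forall>n<N. \<forall>x. g < x \<and> x < h \<longrightarrow> \<not> (P n \<le> x \<and> x \<le> Q n)"
      using Suc.IH[OF o(1) w2(1)] h unfolding SL_def by blast
    have "\<not> (P N \<le> x \<and> x \<le> Q N)" if "g < x" "x < h" for x
    proof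
      assume "P N \<le> x \<and> x \<le> Q N"
      then have "min p b \<le> x" unfolding p_def by (simp add: min.coboundedI1)
      moreover have "a \<le> x" by (rule order.trans[OF gh(1) less_imp_le[OF that(1)]])
      ultimately have "a' \<le> x" unfolding a'_def clamp_def by simp
      moreover have "x < a'" by (rule less_le_trans[OF that(2) gh(3)])
      ultimately show False by simp
    qed
    then have dis: "\<forall>n<Suc N. \<forall>x. g < x \<and> x < h \<longrightarrow> \<not> (P n \<le> x \<and> x \<le> Q n)"
      using gh(5) by (auto simp: less_Suc_eq)
    have "h \<le> b" using gh(3) o by (meson order.trans)
    then show ?case using gh(1,2) dbl[OF gh(4)] dis by blast
  next
    assume h: "SR + w2 \<le> b - b'"
    obtain g h where gh: "b' \<le> g" "g < h" "h \<le> b" "w2 \<le> 2 ^ N *\<^sub>R (h - g)"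
      "\<forall>n<N. \<forall>x. g < x \<and> x < h \<longrightarrow> \<not> (P n \<le> x \<and> x \<le> Q n)"
      using Suc.IH[OF o(3) w2(1)] h unfolding SR_def by blast
    have "\<not> (P N \<le> x \<and> x \<le> Q N)" if "g < x" "x < h" for x
    proof
      assume "P N \<le> x \<and> x \<le> Q N"
      then have "x \<le> q" unfolding q_def by simp
      moreover have "x \<le> b" by (rule order.trans[OF less_imp_le[OF that(2)] gh(3)])
      ultimately have "x \<le> min q b" by simp
      then have "x \<le> b'" unfolding b'_def clamp_def by (rule max.coboundedI2)
      moreover have "b' < x" by (rule le_less_trans[OF gh(1) that(1)])
      ultimately show False by simp
    qed
    then have dis: "\<forall>n<Suc N. \<forall>x. g < x \<and> x < h \<longrightarrow> \<not> (P n \<le> x \<and> x \<le> Q n)"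
      using gh(5) by (auto simp: less_Suc_eq)
    have "a \<le> g" using gh(1) o by (meson order.trans)
    then show ?case using gh(2,3) dbl[OF gh(4)] dis by blast
  qed
qed


lemma len_identity:
  fixes p q a b :: "'a::linordered_ab_group_add"
  assumes "p < q" "a < b"
  shows "(max p (min q a) - p) + (q - min q (max p b)) + mu a b p q = q - p"
  using assms unfolding mu_def clamp_def
  by (auto simp: min_def max_def algebra_simps)
lemma ivl_closed: "x \<in> ivl_set p q cp cq \<Longrightarrow> p \<le> x \<and> x \<le> q"
  unfolding ivl_set_def by (auto split: if_splits)

lemma ivl_open: "p < x \<Longrightarrow> x < q \<Longrightarrow> x \<in> ivl_set p q cp cq"
  unfolding ivl_set_def by auto

lemma sum_list_filter_ok:
  "(\<forall>x\<in>set xs. \<not> ivl_ok x \<longrightarrow> ivl_len x = 0) \<Longrightarrow>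
   sum_list (map ivl_len (filter ivl_ok xs)) = sum_list (map ivl_len xs)"
  by (induction xs) auto

lemma sum_list_concat_upt:
  "sum_list (map f (concat (map g [0..<N]))) = (\<Sum>n<N. sum_list (map f (g n)))"
  for f :: "'b \<Rightarrow> 'a::comm_monoid_add"
  by (induction N) auto

lemma part1:
  assumes "s \<in> cover_sums A" "a < b"
  shows "(b - a) + s \<in> cover_sums (A \<union> ivl_set a b cl cr)"
proof -
  obtain S where S: "is_cover S A" "lc_sums (\<lambda>n. ivl_len (S n)) s"
    using assms(1) unfolding cover_sums_def by auto
  define S' where "S' n = (case n of 0 \<Rightarrow> (a, b, cl, cr) | Suc k \<Rightarrow> S k)" for n
  have ps: "lc_psum (\<lambda>n. ivl_len (S' n)) (Suc j) = (b - a) + lc_psum (\<lambda>n. ivl_len (S n)) j" for j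
    by (induction j) (auto simp: S'_def ivl_len_def algebra_simps)
  have "lc_tendsto (\<lambda>j. lc_psum (\<lambda>n. ivl_len (S' n)) (1 + j)) ((b - a) + s)"
    using tendsto_add_const[of "lc_psum (\<lambda>n. ivl_len (S n))" s "b - a"] S(2) ps
    unfolding lc_sums_def by simp
  then have sums: "lc_sums (\<lambda>n. ivl_len (S' n)) ((b - a) + s)"
    unfolding lc_sums_def by (rule tendsto_shift_back)
  have ok: "ivl_ok (S' n)" for n
    using S(1) assms(2) unfolding S'_def is_cover_def ivl_ok_def by (cases n) auto
  have cov: "A \<union> ivl_set a b cl cr \<subseteq> (\<Union>n. ivl_of (S' n))"
  proof
    fix x assume "x \<in> A \<union> ivl_set a b cl cr"
    then show "x \<in> (\<Union>n. ivl_of (S' n))"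
    proof
      assume "x \<in> A"
      then obtain k where "x \<in> ivl_of (S k)" using S(1) unfolding is_cover_def by blast
      then show ?thesis by (intro UN_I[of "Suc k"]) (auto simp: S'_def)
    next
      assume "x \<in> ivl_set a b cl cr"
      then show ?thesis by (intro UN_I[of 0]) (auto simp: S'_def ivl_of_def)
    qed
  qed
  show ?thesis unfolding cover_sums_def is_cover_def using ok cov sums by blast
qed

lemma part2:
  assumes m: "is_inf_lc (cover_sums A) m" and ab: "a < b"
    and disj: "ivl_set a b cl cr \<inter> A = {}"
    and t: "t \<in> cover_sums (A \<union> ivl_set a b cl cr)"
  shows "m + (b - a) \<le> t"
proof (rule ccontr)
  assume "\<not> ?thesis"
  then have tlt: "t < m + (b - a)" by simp
  define I where "I = ivl_set a b cl cr"
  obtain T where T: "is_cover T (A \<union> I)" "lc_sums (\<lambda>n. ivl_len (T n)) t"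
    using t unfolding cover_sums_def I_def by auto
  define \<delta> where "\<delta> = m + (b - a) - t"
  have dpos: "0 < \<delta>" using tlt unfolding \<delta>_def by simp
  obtain \<eta> where eta: "0 < \<eta>" "\<forall>s>0. \<eta> < s *\<^sub>R \<delta>" using negl_exists[OF dpos] by blast
  obtain N where N: "\<forall>n\<ge>N. ivl_len (T n) < \<eta>" using terms_small[OF T(2) eta(1)] by blast
  define p where "p n = fst (T n)" for n
  define q where "q n = fst (snd (T n))" for n
  define cp where "cp n = fst (snd (snd (T n)))" for n
  define cq where "cq n = snd (snd (snd (T n)))" for n
  have pq: "p n < q n" for n using T(1) unfolding is_cover_def ivl_ok_def p_def q_def by auto
  have lenT: "ivl_len (T n) = q n - p n" for n unfolding ivl_len_def p_def q_def by simp
  have ofT: "ivl_of (T n) = ivl_set (p n) (q n) (cp n) (cq n)" for n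
    unfolding ivl_of_def p_def q_def cp_def cq_def by simp
  define \<epsilon> where "\<epsilon> = (1/4::real) *\<^sub>R \<delta>"
  have epos: "0 < \<epsilon>" unfolding \<epsilon>_def using dpos by (simp add: pos_scaleR)
  define lp where "lp n = (p n, max (p n) (min (q n) a), cp n, if q n \<le> a then cq n else False)" for n
  define rp where "rp n = (min (q n) (max (p n) b), q n, if b \<le> p n then cp n else False, cq n)" for n
  define E1 where "E1 = (a - \<epsilon>, a, True, True)"
  define E2 where "E2 = (b, b + \<epsilon>, True, True)"
  define Lst where "Lst = E1 # E2 # concat (map (\<lambda>n. filter ivl_ok [lp n, rp n]) [0..<N])"
  define W where "W k = (if k < length Lst then Lst ! k else T (N + (k - length Lst)))" for k
  define PT where "PT = lc_psum (\<lambda>n. ivl_len (T n))"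
  define c where "c = sum_list (map ivl_len Lst)"
  define \<sigma> where "\<sigma> = (c - PT N) + t"
  have "ivl_ok E1" "ivl_ok E2" unfolding E1_def E2_def ivl_ok_def using epos by auto
  then have Lok: "\<forall>x\<in>set Lst. ivl_ok x"
    unfolding Lst_def by (auto split: if_splits)
  have okW: "ivl_ok (W k)" for k
    using Lok T(1) unfolding W_def is_cover_def by auto
  have inW: "\<exists>k. x \<in> ivl_of (W k)" if xA: "x \<in> A" for x
  proof -
    obtain n where n: "x \<in> ivl_of (T n)" using T(1) xA unfolding is_cover_def by blast
    show ?thesis
    proof (cases "N \<le> n")
      case True
      then have "\<not> length Lst + (n - N) < length Lst" "N + (length Lst + (n - N) - length Lst) = n" by auto
      then have "W (length Lst + (n - N)) = T n" unfolding W_def by presburger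
      then show ?thesis using n by metis
    next
      case False
      have xT: "x \<in> ivl_set (p n) (q n) (cp n) (cq n)" using n ofT by simp
      have xI: "x \<notin> I" using disj xA unfolding I_def by blast
      have inL: "y \<in> set Lst" if "y \<in> set [lp n, rp n]" "ivl_ok y" for y
      proof -
        have mem: "filter ivl_ok [lp n, rp n] \<in> set (map (\<lambda>n. filter ivl_ok [lp n, rp n]) [0..<N])"
          unfolding set_map using False by (intro imageI) simp
        have "y \<in> set (filter ivl_ok [lp n, rp n])" unfolding set_filter using that by blast
        then have "y \<in> set (concat (map (\<lambda>n. filter ivl_ok [lp n, rp n]) [0..<N]))"
          unfolding set_concat using mem by blast
        then show ?thesis unfolding Lst_def by (rule list.set_intros(2)[OF list.set_intros(2)])
      qed
      have "\<exists>y\<in>set Lst. x \<in> ivl_of y"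
      proof -
        consider "x = a" | "x = b" | "x < a" | "b < x" | "a < x \<and> x < b"
          by (meson linorder_neqE)
        then show ?thesis
        proof cases
          case 1 then show ?thesis unfolding Lst_def E1_def ivl_of_def ivl_set_def using epos by auto
        next
          case 2 then show ?thesis unfolding Lst_def E2_def ivl_of_def ivl_set_def using epos by auto
        next
          case 3
          have "ivl_ok (lp n) \<and> x \<in> ivl_of (lp n)"
          proof (cases "q n \<le> a")
            case True
            then have "lp n = (p n, q n, cp n, cq n)" unfolding lp_def
              using pq[of n] less_imp_le[OF pq[of n]] by (simp add: min_def max_def)
            then show ?thesis using xT pq[of n] unfolding ivl_of_def
              by (auto simp: ivl_ok_def)
          next
            case qa: False
            have "p n \<le> x" using ivl_closed[OF xT] by simp
            then have pa: "p n < a" using 3 by (rule le_less_trans)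
            then have "lp n = (p n, a, cp n, False)" unfolding lp_def using qa less_imp_le[OF pa]
              by (simp add: min_def max_def)
            then show ?thesis using xT pa 3 unfolding ivl_of_def
              by (auto simp: ivl_ok_def ivl_set_def)
          qed
          then show ?thesis using inL[of "lp n"] by auto
        next
          case 4
          have "ivl_ok (rp n) \<and> x \<in> ivl_of (rp n)"
          proof (cases "b \<le> p n")
            case True
            then have "rp n = (p n, q n, cp n, cq n)" unfolding rp_def
              using pq[of n] less_imp_le[OF pq[of n]] by (simp add: min_def max_def)
            then show ?thesis using xT pq[of n] unfolding ivl_of_def
              by (auto simp: ivl_ok_def)
          next
            case bp: False
            have "x \<le> q n" using ivl_closed[OF xT] by simp
            then have bq: "b < q n" using 4 by (rule less_le_trans[rotated])
            then have "rp n = (b, q n, False, cq n)" unfolding rp_def using bp less_imp_le[OF bq] less_imp_le[OF not_le_imp_less[OF bp]]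
              by (simp add: min_def max_def)
            then show ?thesis using xT bq 4 unfolding ivl_of_def
              by (auto simp: ivl_ok_def ivl_set_def)
          qed
          then show ?thesis using inL[of "rp n"] by auto
        next
          case 5
          then have "x \<in> I" unfolding I_def using ivl_open by blast
          then show ?thesis using xI by simp
        qed
      qed
      then obtain i where "i < length Lst" "x \<in> ivl_of (Lst ! i)"
        by (metis in_set_conv_nth)
      then show ?thesis unfolding W_def by (intro exI[of _ i]) simp
    qed
  qed
  have psW: "lc_psum (\<lambda>k. ivl_len (W k)) (length Lst + j) = (c - PT N) + PT (N + j)" for j
  proof -
    have "lc_psum (\<lambda>k. ivl_len (W k)) (length Lst + j)
       = (\<Sum>k<length Lst. ivl_len (W k)) + (\<Sum>i<j. ivl_len (W (length Lst + i)))"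
      unfolding psum_sum by (rule sum_split_nat)
    also have "(\<Sum>k<length Lst. ivl_len (W k)) = c"
      unfolding c_def W_def sum_list_sum_nth lessThan_atLeast0 by simp
    also have "(\<Sum>i<j. ivl_len (W (length Lst + i))) = (\<Sum>i<j. ivl_len (T (N + i)))"
      unfolding W_def by simp
    also have "\<dots> = PT (N + j) - PT N"
      unfolding PT_def psum_sum sum_split_nat[of _ N j] by simp
    finally show ?thesis by (simp add: algebra_simps)
  qed
  have "lc_tendsto (\<lambda>j. PT (N + j)) t"
    using T(2) unfolding lc_sums_def PT_def by (rule tendsto_shift_fwd)
  then have "lc_tendsto (\<lambda>j. (c - PT N) + PT (N + j)) \<sigma>"
    unfolding \<sigma>_def by (rule tendsto_add_const)
  then have "lc_tendsto (\<lambda>j. lc_psum (\<lambda>k. ivl_len (W k)) (length Lst + j)) \<sigma>"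
    by (simp only: psW)
  then have sumW: "lc_sums (\<lambda>k. ivl_len (W k)) \<sigma>"
    unfolding lc_sums_def by (rule tendsto_shift_back)
  have "A \<subseteq> (\<Union>k. ivl_of (W k))" using inW by blast
  then have "is_cover W A" unfolding is_cover_def using okW sumW by blast
  then have "\<sigma> \<in> cover_sums A"
    unfolding cover_sums_def using sumW by blast
  then have msig: "m \<le> \<sigma>" using m unfolding is_inf_lc_def by blast
  define MU where "MU = (\<Sum>n<N. mu a b (p n) (q n))"
  have lpl: "ivl_len (lp n) = max (p n) (min (q n) a) - p n" for n unfolding lp_def ivl_len_def by simp
  have rpl: "ivl_len (rp n) = q n - min (q n) (max (p n) b)" for n unfolding rp_def ivl_len_def by simp
  have lp0: "\<not> ivl_ok (lp n) \<longrightarrow> ivl_len (lp n) = 0" for n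
    unfolding lp_def ivl_ok_def ivl_len_def by (auto simp: max_def)
  have rp0: "\<not> ivl_ok (rp n) \<longrightarrow> ivl_len (rp n) = 0" for n
  proof
    assume "\<not> ivl_ok (rp n)"
    then have "\<not> min (q n) (max (p n) b) < q n" unfolding rp_def ivl_ok_def by simp
    then have "min (q n) (max (p n) b) = q n" using min.cobounded1[of "q n" "max (p n) b"]
      by (simp add: order.not_eq_order_implies_strict)
    then show "ivl_len (rp n) = 0" unfolding rp_def ivl_len_def by simp
  qed
  have fl: "sum_list (map ivl_len (filter ivl_ok [lp n, rp n])) = ivl_len (lp n) + ivl_len (rp n)" for n
    using sum_list_filter_ok[of "[lp n, rp n]"] lp0[of n] rp0[of n] by simp
  have e12: "ivl_len E1 = \<epsilon>" "ivl_len E2 = \<epsilon>" unfolding E1_def E2_def ivl_len_def by simp_all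
  have "c = ivl_len E1 + (ivl_len E2 + sum_list (map ivl_len (concat (map (\<lambda>n. filter ivl_ok [lp n, rp n]) [0..<N]))))"
    unfolding c_def Lst_def by (simp only: list.map sum_list.Cons)
  also have "\<dots> = \<epsilon> + (\<epsilon> + (\<Sum>n<N. ivl_len (lp n) + ivl_len (rp n)))"
    unfolding sum_list_concat_upt e12 by (simp only: fl)
  also have "(\<Sum>n<N. ivl_len (lp n) + ivl_len (rp n)) = (\<Sum>n<N. ivl_len (T n) - mu a b (p n) (q n))"
  proof (rule sum.cong)
    fix n
    show "ivl_len (lp n) + ivl_len (rp n) = ivl_len (T n) - mu a b (p n) (q n)"
      using len_identity[OF pq[of n] ab] unfolding lpl rpl lenT by (simp add: algebra_simps)
  qed simp
  also have "\<dots> = PT N - MU" unfolding PT_def psum_sum MU_def by (simp add: sum_subtractf)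
  finally have cval: "c = \<epsilon> + \<epsilon> + (PT N - MU)" by (simp add: algebra_simps)
  define w where "w = (1/2::real) *\<^sub>R \<delta>"
  have wpos: "0 < w" unfolding w_def using dpos by (simp add: pos_scaleR)
  have ee: "\<epsilon> + \<epsilon> = w" unfolding \<epsilon>_def w_def scaleR_add_left[symmetric] by simp
  have ww: "w + w = \<delta>" unfolding w_def by (rule half_half)
  have "MU + w \<le> b - a"
  proof -
    have "m \<le> w + (PT N - MU) - PT N + t" using msig unfolding \<sigma>_def cval ee by (simp add: algebra_simps)
    then have "m \<le> w - MU + t" by (simp add: algebra_simps)
    then have "MU + w \<le> w + w + t - m" by (simp add: algebra_simps)
    then show ?thesis unfolding ww \<delta>_def by (simp add: algebra_simps)
  qed
  moreover have "p n \<le> q n" for n using pq[of n] by simp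
  ultimately obtain g h where gh: "a \<le> g" "g < h" "h \<le> b" "w \<le> (2^N) *\<^sub>R (h - g)"
    "\<forall>n<N. \<forall>x. g < x \<and> x < h \<longrightarrow> \<not> (p n \<le> x \<and> x \<le> q n)"
    using FC[of p q a b w N] ab wpos unfolding MU_def by (meson less_imp_le)
  define X where "X s = g + s *\<^sub>R (h - g)" for s :: real
  have hg: "0 < h - g" using gh by simp
  have Xin: "g < X s \<and> X s < h" if "0 < s" "s < 1" for s
  proof
    show "g < X s" unfolding X_def using pos_scaleR[OF that(1) hg] by simp
    have "0 < (1 - s) *\<^sub>R (h - g)" using pos_scaleR[of "1 - s", OF _ hg] that by simp
    then show "X s < h" unfolding X_def by (simp add: algebra_simps scaleR_left_diff_distrib)
  qed
  have ex: "\<exists>n. X s \<in> ivl_of (T n)" if "0 < s" "s < 1" for s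
  proof -
    have "a < X s" using le_less_trans[OF gh(1)] Xin[OF that] by blast
    moreover have "X s < b" using less_le_trans[OF _ gh(3)] Xin[OF that] by blast
    ultimately have "X s \<in> I" unfolding I_def by (rule ivl_open)
    then show ?thesis using T(1) unfolding is_cover_def by blast
  qed
  define nf where "nf s = (SOME n. X s \<in> ivl_of (T n))" for s
  have nf: "X s \<in> ivl_set (p (nf s)) (q (nf s)) (cp (nf s)) (cq (nf s))" if "0 < s" "s < 1" for s
    using someI_ex[OF ex[OF that]] unfolding nf_def ofT by simp
  have nfN: "N \<le> nf s" if "0 < s" "s < 1" for s
  proof (rule ccontr)
    assume "\<not> N \<le> nf s"
    then have "nf s < N" by simp
    then show False using gh(5) Xin[OF that] ivl_closed[OF nf[OF that]] by blast
  qed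
  have key: "False" if "0 < s1" "s1 < s2" "s2 < 1" "nf s1 = nf s2" for s1 s2
  proof -
    define n where "n = nf s1"
    have s1: "0 < s1" "s1 < 1" and s2: "0 < s2" "s2 < 1" using that by auto
    have c1: "p n \<le> X s1" using ivl_closed[OF nf[OF s1]] unfolding n_def by simp
    have c2: "X s2 \<le> q n" using ivl_closed[OF nf[OF s2]] that(4) unfolding n_def by simp
    have "X s2 - X s1 \<le> q n - p n" by (rule diff_mono[OF c2 c1])
    also have "\<dots> < \<eta>" using N nfN[OF s1] lenT unfolding n_def by auto
    also have "\<eta> < ((s2 - s1) / 2^N) *\<^sub>R w"
    proof -
      have "0 < (s2 - s1) / 2^(Suc N)" using that by simp
      then have "\<eta> < ((s2 - s1) / 2^(Suc N)) *\<^sub>R \<delta>" using eta by blast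
      also have "\<dots> = ((s2 - s1) / 2^N) *\<^sub>R w" unfolding w_def by simp
      finally show ?thesis .
    qed
    also have "\<dots> \<le> ((s2 - s1) / 2^N) *\<^sub>R ((2^N) *\<^sub>R (h - g))"
      using gh(4) by (rule scaleR_left_mono) (use that in simp)
    also have "\<dots> = X s2 - X s1" unfolding X_def by (simp add: scaleR_left_diff_distrib)
    finally show False by simp
  qed
  have "inj_on nf {0<..<(1::real)}"
  proof (rule inj_onI)
    fix s1 s2 assume "s1 \<in> {0<..<(1::real)}" "s2 \<in> {0<..<(1::real)}" "nf s1 = nf s2"
    then show "s1 = s2" using key[of s1 s2] key[of s2 s1]
      by (cases s1 s2 rule: linorder_cases) auto
  qed
  then have "countable {0<..<(1::real)}" unfolding countable_def by blast
  then show False using uncountable_open_interval[of 0 1] by simp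
qed

theorem mainTheorem6:
  fixes A :: "lc set" and a b :: lc and cl cr :: bool
  assumes "outer_measurable A"
    and "a < b"
    and "ivl_set a b cl cr \<inter> A = {}"
  shows "outer_measurable (A \<union> ivl_set a b cl cr)
         \<and> Mu (A \<union> ivl_set a b cl cr) = Mu A + (b - a)"
proof -
  obtain m where m: "is_inf_lc (cover_sums A) m" using assms(1) unfolding outer_measurable_def by blast
  have MuA: "Mu A = m" unfolding Mu_def using m inf_unique by blast
  have inf2: "is_inf_lc (cover_sums (A \<union> ivl_set a b cl cr)) (m + (b - a))"
    unfolding is_inf_lc_def
  proof (intro conjI ballI allI impI)
    fix t assume "t \<in> cover_sums (A \<union> ivl_set a b cl cr)"
    then show "m + (b - a) \<le> t" using part2[OF m assms(2,3)] by blast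
  next
    fix m' assume h: "\<forall>x\<in>cover_sums (A \<union> ivl_set a b cl cr). m' \<le> x"
    have "\<forall>s\<in>cover_sums A. m' - (b - a) \<le> s"
    proof
      fix s assume "s \<in> cover_sums A"
      then have "m' \<le> (b - a) + s" using h part1[OF _ assms(2)] by blast
      then show "m' - (b - a) \<le> s" by (simp add: algebra_simps)
    qed
    then have "m' - (b - a) \<le> m" using m unfolding is_inf_lc_def by blast
    then show "m' \<le> m + (b - a)" by (simp add: algebra_simps)
  qed
  have "Mu (A \<union> ivl_set a b cl cr) = m + (b - a)"
    unfolding Mu_def using inf2 inf_unique by blast
  then show ?thesis using inf2 MuA unfolding outer_measurable_def by blast
qed

end
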